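(* Let $b_x,b_y,u_x,u_y,K,\beta$ be positive constants with $u_y>u_x$ and $b_x\geq b_y$, let $h>0$, and set \[ \phi_1(h)=\frac{b_y\left\{1-\exp\left(-\frac{\beta K u_y}{b_y}h\right)\right\}}{\beta K u_y},\qquad \phi_2(h)=h . \] Consider the discrete system \[ X_{n+1}=\frac{X_n(1+\phi_1(h)b_x)}{1+\phi_1(h)\left(\frac{b_x}{K}X_n+\frac{b_x}{K}Y_n+u_x+\beta Y_n\right)},\qquad Y_{n+1}=\frac{Y_n\{1+\phi_2(h)(b_y+\beta X_n)\}}{1+\phi_2(h)\left(\frac{b_y}{K}X_n+\frac{b_y}{K}Y_n+u_y\right)} . \] Let $\bar X=K(1-u_x/b_x)$, $\bar Y=K(1-u_y/b_y)$, $R_0=\frac{b_y}{b_x}\frac{u_x}{u_y}+\frac{\beta}{u_y}\bar X$, and $E_H^*=(X_H^*,Y_H^* )$ with \[ X_H^*=\frac{b_xu_y-b_yu_x-\beta K(b_y-u_y)}{\beta(\beta K+b_x-b_y)},\qquad Y_H^*=\frac{b_yu_x-b_xu_y+\beta K(b_x-u_x)}{\beta(\beta K+b_x-b_y)} . \] Then, for every $h>0$, the system is locally asymptotically stable around the fixed point (i) $E_0^H=(0,0)$ if $b_x<u_x$ and $b_y<u_y$; (ii) $E_1^H=(\bar X,0)$ if $b_x>u_x$ and $R_0<1$; (iii) $E_2^H=(0,\bar Y)$ if $b_y>u_y$ and $\frac{b_xu_y}{b_y}<u_x+\beta K\left(1-\frac{u_y}{b_y}\right)$; (iv) $E_H^*$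 if $b_x>u_x$, $b_y>u_y$, $\frac{b_xu_y}{b_y}>u_x+\beta K\left(1-\frac{u_y}{b_y}\right)$ and $R_0>1$.
   Context: This is a nonstandard finite-difference discretization (step size $h$) of a host–parasite model with horizontal and perfect vertical transmission; $X,Y$ are uninfected and infected host densities, $b_x,b_y$ birth rates, $u_x,u_y$ death rates, $K$ carrying capacity, $\beta$ transmission coefficient. The paper assumes throughout that $u_y>u_x$ and $b_x\geq b_y$. A fixed point of the map is called (locally asymptotically) stable if both eigenvalues of the Jacobian of the map at the fixed point have modulus strictly less than $1$. *)

theory Defs
  imports "HOL-Analysis.Analysis"
begin

definition phi1 :: "real \<Rightarrow> real \<Rightarrow> real \<Rightarrow> real \<Rightarrow> real \<Rightarrow> real" where
  "phi1 b_y u_y K \<beta> h = b_y * (1 - exp (- (\<beta> * K * u_y / b_y) * h)) / (\<beta> * K * u_y)"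

definition phi2 :: "real \<Rightarrow> real" where
  "phi2 h = h"

definition hp_map ::
  "real \<Rightarrow> real \<Rightarrow> real \<Rightarrow> real \<Rightarrow> real \<Rightarrow> real \<Rightarrow> real \<Rightarrow> real \<times> real \<Rightarrow> real \<times> real" where
  "hp_map b_x b_y u_x u_y K \<beta> h = (\<lambda>(X, Y).
     (X * (1 + phi1 b_y u_y K \<beta> h * b_x) /
        (1 + phi1 b_y u_y K \<beta> h * (b_x / K * X + b_x / K * Y + u_x + \<beta> * Y)),
      Y * (1 + phi2 h * (b_y + \<beta> * X)) /
        (1 + phi2 h * (b_y / K * X + b_y / K * Y + u_y))))"

definition eigenvalues2 :: "real \<Rightarrow> real \<Rightarrow> real \<Rightarrow> real \<Rightarrow> complex set" where
  "eigenvalues2 a11 a12 a21 a22 =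
     {z. (of_real a11 - z) * (of_real a22 - z) - of_real a12 * of_real a21 = 0}"

text \<open>p is a locally asymptotically stable fixed point of F: F p = p, F is differentiable
  at p, and both eigenvalues of the Jacobian at p have modulus < 1.  The Jacobian
  is the matrix of the Frechet derivative D: column j is D applied to the j-th unit vector.\<close>
definition stable_fixed_point :: "(real \<times> real \<Rightarrow> real \<times> real) \<Rightarrow> real \<times> real \<Rightarrow> bool" where
  "stable_fixed_point F p \<longleftrightarrow> F p = p \<and>
     (\<exists>D. (F has_derivative D) (at p) \<and>
        (\<forall>z\<in>eigenvalues2 (fst (D (1, 0))) (fst (D (0, 1))) (snd (D (1, 0))) (snd (D (0, 1))).
           cmod z < 1))"

end

theory Submission
  imports Defs
begin

lemma jury:
  fixes a11 a12 a21 a22 :: real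
  assumes d1: "a11*a22 - a12*a21 < 1"
    and d2: "1 - (a11+a22) + (a11*a22 - a12*a21) > 0"
    and d3: "1 + (a11+a22) + (a11*a22 - a12*a21) > 0"
  shows "\<forall>z\<in>eigenvalues2 a11 a12 a21 a22. cmod z < 1"
proof
  fix z assume "z \<in> eigenvalues2 a11 a12 a21 a22"
  hence e: "(of_real a11 - z) * (of_real a22 - z) - of_real a12 * of_real a21 = 0"
    by (simp add: eigenvalues2_def)
  obtain x y where z: "z = Complex x y" by (cases z)
  have re: "(a11 - x)*(a22 - x) - y*y - a12*a21 = 0"
    using arg_cong[OF e, of Re] by (simp add: z)
  have im: "y * (a11 + a22 - 2*x) = 0"
    using arg_cong[OF e, of Im] by (simp add: z algebra_simps)
  have "x*x + y*y < 1"
  proof (cases "y = 0")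
    case False
    with im have x: "a11 + a22 = 2*x" by simp
    have "x*x + y*y = a11*a22 - a12*a21" proof -
      have "a11*x + a22*x = 2*x*x" using x by (metis distrib_right mult.commute mult.left_commute)
      thus ?thesis using re by (simp add: algebra_simps)
    qed
    with d1 show ?thesis by simp
  next
    case True
    define w where "w = a11 + a22 - x"
    have D: "a11*a22 - a12*a21 = x * w" using re True unfolding w_def by (simp add: algebra_simps)
    have p1: "(1 - x) * (1 - w) > 0" using d2 D unfolding w_def by (simp add: algebra_simps)
    have p2: "(1 + x) * (1 + w) > 0" using d3 D unfolding w_def by (simp add: algebra_simps)
    have "x < 1"
    proof (rule ccontr)
      assume "\<not> x < 1"
      hence "1 - x < 0" using p1 by (cases "x = 1") auto
      hence "1 - w < 0" using p1 by (simp add: zero_less_mult_iff)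
      hence "x * w > 1" proof -
        have "(x - 1) * (w - 1) > 0" using \<open>1 - x < 0\<close> \<open>1 - w < 0\<close> by simp
        thus ?thesis using \<open>1 - x < 0\<close> \<open>1 - w < 0\<close> by (simp add: algebra_simps)
      qed
      thus False using d1 D by simp
    qed
    moreover have "x > -1"
    proof (rule ccontr)
      assume "\<not> x > -1"
      hence "1 + x < 0" using p2 by (cases "x = -1") auto
      hence "1 + w < 0" using p2 by (simp add: zero_less_mult_iff)
      hence "x * w > 1" proof -
        have "(-1 - x) * (-1 - w) > 0" using \<open>1 + x < 0\<close> \<open>1 + w < 0\<close> by simp
        thus ?thesis using \<open>1 + x < 0\<close> \<open>1 + w < 0\<close> by (simp add: algebra_simps)
      qed
      thus False using d1 D by simp
    qed
    ultimately have "(1 - x)*(1 + x) > 0" by simp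
    thus ?thesis using True by (simp add: algebra_simps)
  qed
  thus "cmod z < 1" by (simp add: z cmod_def power2_eq_square)
qed

lemma hp_deriv:
  fixes bx byy ux uy K \<beta> h X Y c a11 a12 a21 a22 :: real
  assumes c: "c = phi1 byy uy K \<beta> h"
  assumes nz1: "1 + c * (bx / K * X + bx / K * Y + ux + \<beta> * Y) \<noteq> 0"
    and nz2: "1 + h * (byy / K * X + byy / K * Y + uy) \<noteq> 0" and Knz: "K \<noteq> 0"
    and e11: "a11 = (1 + c*bx)/(1 + c * (bx / K * X + bx / K * Y + ux + \<beta> * Y))
               - X*(1 + c*bx)*c*(bx/K)/(1 + c * (bx / K * X + bx / K * Y + ux + \<beta> * Y))^2"
    and e12: "a12 = - X*(1 + c*bx)*c*(bx/K+\<beta>)/(1 + c * (bx / K * X + bx / K * Y + ux + \<beta> * Y))^2"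
    and e21: "a21 = Y*h*\<beta>/(1 + h * (byy / K * X + byy / K * Y + uy))
               - Y*(1 + h * (byy + \<beta> * X))*h*(byy/K)/(1 + h * (byy / K * X + byy / K * Y + uy))^2"
    and e22: "a22 = (1 + h * (byy + \<beta> * X))/(1 + h * (byy / K * X + byy / K * Y + uy))
               - Y*(1 + h * (byy + \<beta> * X))*h*(byy/K)/(1 + h * (byy / K * X + byy / K * Y + uy))^2"
  shows "(hp_map bx byy ux uy K \<beta> h has_derivative
     (\<lambda>(dx, dy). (a11 * dx + a12 * dy, a21 * dx + a22 * dy))) (at (X, Y))"
proof -
  define B1 where "B1 = 1 + c * (bx / K * X + bx / K * Y + ux + \<beta> * Y)"
  define B2 where "B2 = 1 + h * (byy / K * X + byy / K * Y + uy)"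
  define A where "A = 1 + c * bx"
  define N where "N = 1 + h * (byy + \<beta> * X)"
  have eq: "hp_map bx byy ux uy K \<beta> h = (\<lambda>p. (fst p * A / (1 + c * (bx / K * fst p + bx / K * snd p + ux + \<beta> * snd p)),
      snd p * (1 + h * (byy + \<beta> * fst p)) / (1 + h * (byy / K * fst p + byy / K * snd p + uy))))"
    by (auto simp: hp_map_def c A_def phi2_def fun_eq_iff)
  have B1': "1 + c * (bx * X / K + bx * Y / K + ux + \<beta> * Y) = B1" by (simp add: B1_def)
  have B2': "1 + h * (byy * X / K + byy * Y / K + uy) = B2" by (simp add: B2_def)
  have n1: "B1 \<noteq> 0" using nz1 by (simp add: B1_def)
  have n2: "B2 \<noteq> 0" using nz2 by (simp add: B2_def)
  have e: "a11 = A/B1 - X*A*c*(bx/K)/B1^2" "a12 = - X*A*c*(bx/K+\<beta>)/B1^2"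
     "a21 = Y*h*\<beta>/B2 - Y*N*h*(byy/K)/B2^2" "a22 = N/B2 - Y*N*h*(byy/K)/B2^2"
    using e11 e12 e21 e22 by (simp_all add: A_def B1_def B2_def N_def)
  show ?thesis unfolding eq e
    apply (rule has_derivative_eq_rhs)
     apply (rule derivative_eq_intros refl | simp only: fst_conv snd_conv nz1 nz2 not_False_eq_True)+
    apply (simp add: fun_eq_iff B1_def[symmetric] B2_def[symmetric] N_def[symmetric])
    apply (simp only: B1' B2')
    apply (simp add: power2_eq_square field_simps n1 n2 Knz)
    done
qed

lemma stable_intro:
  fixes a11 a12 a21 a22 :: real
  assumes "F p = p" "(F has_derivative (\<lambda>(dx, dy). (a11 * dx + a12 * dy, a21 * dx + a22 * dy))) (at p)"
   "a11*a22 - a12*a21 < 1" "1 - (a11+a22) + (a11*a22 - a12*a21) > 0" "1 + (a11+a22) + (a11*a22 - a12*a21) > 0"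
  shows "stable_fixed_point F p"
  unfolding stable_fixed_point_def
  using jury[OF assms(3-5)] assms(1,2) by (intro conjI exI[of _ "\<lambda>(dx, dy). (a11 * dx + a12 * dy, a21 * dx + a22 * dy)"]) auto

lemma tri_jury:
  fixes a11 a12 a21 a22 :: real
  assumes "a12*a21 = 0" "\<bar>a11\<bar> < 1" "\<bar>a22\<bar> < 1"
  shows "a11*a22 - a12*a21 < 1" "1 - (a11+a22) + (a11*a22 - a12*a21) > 0" "1 + (a11+a22) + (a11*a22 - a12*a21) > 0"
proof -
  have "\<bar>a11*a22\<bar> < 1" using assms by (simp add: abs_mult) (smt (verit) abs_ge_zero mult_le_one mult_less_cancel_right1 mult_nonneg_nonneg)
  thus "a11*a22 - a12*a21 < 1" using assms(1) by linarith
  have "(1 - a11)*(1-a22) > 0" using assms by (simp add: abs_less_iff)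
  thus "1 - (a11+a22) + (a11*a22 - a12*a21) > 0" by (simp add: assms(1) algebra_simps)
  have "(1 + a11)*(1+a22) > 0" using assms by (simp add: abs_less_iff)
  thus "1 + (a11+a22) + (a11*a22 - a12*a21) > 0" by (simp add: assms(1) algebra_simps)
qed

lemma m_jury:
  fixes a11 a12 a21 a22 m :: real
  assumes "m = (1-a11)*(1-a22) - a12*a21" "m > 0" "m < (1-a11)+(1-a22)" "a11 > 0" "a22 > 0"
  shows "a11*a22 - a12*a21 < 1" "1 - (a11+a22) + (a11*a22 - a12*a21) > 0" "1 + (a11+a22) + (a11*a22 - a12*a21) > 0"
  using assms by (simp_all add: algebra_simps)

theorem theorem5:
  fixes b_x b_y u_x u_y K \<beta> h :: real
  assumes pos: "b_x > 0" "b_y > 0" "u_x > 0" "u_y > 0" "K > 0" "\<beta> > 0"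
    and uyx: "u_y > u_x" and bxy: "b_x \<ge> b_y"
    and hpos: "h > 0"
  defines "Xbar \<equiv> K * (1 - u_x / b_x)"
    and "Ybar \<equiv> K * (1 - u_y / b_y)"
    and "R0 \<equiv> (b_y / b_x) * (u_x / u_y) + \<beta> / u_y * K * (1 - u_x / b_x)"
    and "XH \<equiv> (b_x * u_y - b_y * u_x - \<beta> * K * (b_y - u_y)) / (\<beta> * (\<beta> * K + b_x - b_y))"
    and "YH \<equiv> (b_y * u_x - b_x * u_y + \<beta> * K * (b_x - u_x)) / (\<beta> * (\<beta> * K + b_x - b_y))"
  shows
    "(b_x < u_x \<and> b_y < u_y \<longrightarrow> stable_fixed_point (hp_map b_x b_y u_x u_y K \<beta> h) (0, 0)) \<and>
     (b_x > u_x \<and> R0 < 1 \<longrightarrow> stable_fixed_point (hp_map b_x b_y u_x u_y K \<beta> h) (Xbar, 0)) \<and>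
     (b_y > u_y \<and> b_x * u_y / b_y < u_x + \<beta> * K * (1 - u_y / b_y)
        \<longrightarrow> stable_fixed_point (hp_map b_x b_y u_x u_y K \<beta> h) (0, Ybar)) \<and>
     (b_x > u_x \<and> b_y > u_y \<and> b_x * u_y / b_y > u_x + \<beta> * K * (1 - u_y / b_y) \<and> R0 > 1
        \<longrightarrow> stable_fixed_point (hp_map b_x b_y u_x u_y K \<beta> h) (XH, YH))"
proof -
  define c where "c = phi1 b_y u_y K \<beta> h"
  have ex: "exp (- (\<beta> * K * u_y / b_y) * h) < 1" using pos hpos by simp
  have ex0: "exp (- (\<beta> * K * u_y / b_y) * h) > 0" by simp
  have cpos: "c > 0" using ex pos unfolding c_def phi1_def by (simp add: field_simps)
  have cbd: "c * (\<beta> * K * u_y) < b_y" using ex0 pos unfolding c_def phi1_def by (simp add: field_simps)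
  have Knz: "K \<noteq> 0" using pos by simp
  have fix_map: "hp_map b_x b_y u_x u_y K \<beta> h = (\<lambda>(X, Y).
     (X * (1 + c * b_x) / (1 + c * (b_x / K * X + b_x / K * Y + u_x + \<beta> * Y)),
      Y * (1 + h * (b_y + \<beta> * X)) / (1 + h * (b_y / K * X + b_y / K * Y + u_y))))"
    by (simp add: hp_map_def c_def phi2_def)
  note hd = hp_deriv[OF c_def _ _ Knz]
  have C1: "b_x < u_x \<and> b_y < u_y \<longrightarrow> stable_fixed_point (hp_map b_x b_y u_x u_y K \<beta> h) (0, 0)"
  proof
    assume a: "b_x < u_x \<and> b_y < u_y"
    let ?a11 = "(1 + c*b_x)/(1 + c*u_x)" and ?a22 = "(1 + h*b_y)/(1 + h*u_y)"
    have D: "(hp_map b_x b_y u_x u_y K \<beta> h has_derivative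
       (\<lambda>(dx, dy). (?a11 * dx + 0 * dy, 0 * dx + ?a22 * dy))) (at (0, 0))"
    proof (rule hd)
      have "1 + c*u_x > 0" "1 + h*u_y > 0" using cpos pos hpos by (simp_all add: add_pos_pos)
      thus "1 + c * (b_x / K * 0 + b_x / K * 0 + u_x + \<beta> * 0) \<noteq> 0" "1 + h * (b_y / K * 0 + b_y / K * 0 + u_y) \<noteq> 0"
        by simp_all
    qed simp_all
    have q1: "1 + c*u_x > 0" "1 + c*b_x > 0" "1 + h*u_y > 0" "1 + h*b_y > 0" using cpos pos hpos by (simp_all add: add_pos_pos)
    have q2: "1 + c*b_x < 1 + c*u_x" "1 + h*b_y < 1 + h*u_y" using cpos hpos a by simp_all
    have "\<bar>?a11\<bar> < 1" using q1 q2 by (simp add: abs_less_iff)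
    moreover have "\<bar>?a22\<bar> < 1" using q1 q2 by (simp add: abs_less_iff)
    ultimately have J: "?a11*?a22 - 0*0 < 1" "1 - (?a11+?a22) + (?a11*?a22 - 0*0) > 0" "1 + (?a11+?a22) + (?a11*?a22 - 0*0) > 0"
      using tri_jury[of 0 0 ?a11 ?a22] by simp_all
    show "stable_fixed_point (hp_map b_x b_y u_x u_y K \<beta> h) (0, 0)"
      by (rule stable_intro[OF _ D J]) (simp add: hp_map_def)
  qed
  have C2: "b_x > u_x \<and> R0 < 1 \<longrightarrow> stable_fixed_point (hp_map b_x b_y u_x u_y K \<beta> h) (Xbar, 0)"
  proof
    assume a: "b_x > u_x \<and> R0 < 1"
    have xb: "b_x / K * Xbar = b_x - u_x" using pos unfolding Xbar_def by (simp add: field_simps)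
    have xb2: "b_y / K * Xbar = b_y - b_y * u_x / b_x" using pos unfolding Xbar_def by (simp add: field_simps)
    have r: "b_y * u_x / b_x + \<beta> * Xbar < u_y" using a pos unfolding R0_def Xbar_def by (simp add: field_simps)
    let ?a11 = "1 - c*(b_x - u_x)/(1 + c*b_x)" and ?a12 = "- Xbar*c*(b_x/K+\<beta>)/(1 + c*b_x)"
    let ?a22 = "(1 + h * (b_y + \<beta> * Xbar))/(1 + h * (b_y / K * Xbar + u_y))"
    have B1: "1 + c * (b_x / K * Xbar + b_x / K * 0 + u_x + \<beta> * 0) = 1 + c*b_x" using xb by simp
    have B2: "1 + h * (b_y / K * Xbar + b_y / K * 0 + u_y) = 1 + h * (b_y / K * Xbar + u_y)" by simp
    have p1: "1 + c*b_x > 0" using cpos pos by (simp add: add_pos_pos)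
    have Xp: "Xbar > 0" using a pos unfolding Xbar_def by (simp add: field_simps)
    have "b_y / K * Xbar + u_y > 0" using Xp pos by (simp add: add_pos_pos)
    hence p2: "1 + h * (b_y / K * Xbar + u_y) > 0" using hpos by (simp add: add_pos_pos)
    have D: "(hp_map b_x b_y u_x u_y K \<beta> h has_derivative
       (\<lambda>(dx, dy). (?a11 * dx + ?a12 * dy, 0 * dx + ?a22 * dy))) (at (Xbar, 0))"
    proof -
      obtain A where A: "A = 1 + c*b_x" and An: "A \<noteq> 0" using p1 by auto
      obtain P where P: "P = 1 + h * (b_y / K * Xbar + u_y)" and Pn: "P \<noteq> 0" using p2 by auto
      have xc: "Xbar * c * b_x / K = c*(b_x - u_x)"
      proof -
        have "Xbar * c * b_x / K = c * (b_x / K * Xbar)" by simp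
        also have "\<dots> = c*(b_x - u_x)" by (simp only: xb)
        finally show ?thesis .
      qed
      show ?thesis
        apply (rule hd)
        apply (simp_all only: B1 B2)
        apply (simp_all only: A[symmetric] P[symmetric] An Pn not_False_eq_True)
        using An Pn Knz xc apply (simp_all add: field_simps power2_eq_square)
        by (metis distrib_left)
    qed
    have "?a11 = (1 + c*u_x)/(1+c*b_x)" using p1 by (simp add: field_simps)
    moreover have "c*u_x < c*b_x" "c*u_x > 0" using cpos pos a by simp_all
    ultimately have "\<bar>?a11\<bar> < 1" using p1 by (simp add: abs_less_iff)
    moreover have "\<bar>?a22\<bar> < 1"
    proof -
      have "b_y + \<beta> * Xbar < b_y / K * Xbar + u_y" using r xb2 by simp
      hence "1 + h * (b_y + \<beta> * Xbar) < 1 + h * (b_y / K * Xbar + u_y)" using hpos by simp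
      moreover have "1 + h * (b_y + \<beta> * Xbar) > 0" using hpos pos Xp by (simp add: add_pos_pos)
      ultimately show ?thesis using p2 by (simp add: abs_less_iff)
    qed
    ultimately have J: "?a11*?a22 - ?a12*0 < 1" "1 - (?a11+?a22) + (?a11*?a22 - ?a12*0) > 0" "1 + (?a11+?a22) + (?a11*?a22 - ?a12*0) > 0"
      using tri_jury[of ?a12 0 ?a11 ?a22] by simp_all
    show "stable_fixed_point (hp_map b_x b_y u_x u_y K \<beta> h) (Xbar, 0)"
      by (rule stable_intro[OF _ D J]) (use xb p1 in \<open>simp add: fix_map\<close>)
  qed
  have C3: "b_y > u_y \<and> b_x * u_y / b_y < u_x + \<beta> * K * (1 - u_y / b_y)
        \<longrightarrow> stable_fixed_point (hp_map b_x b_y u_x u_y K \<beta> h) (0, Ybar)"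
  proof
    assume a: "b_y > u_y \<and> b_x * u_y / b_y < u_x + \<beta> * K * (1 - u_y / b_y)"
    have yb: "b_y / K * Ybar = b_y - u_y" using pos unfolding Ybar_def by (simp add: field_simps)
    have Yp: "Ybar > 0" using a pos unfolding Ybar_def by (simp add: field_simps)
    have r: "b_x < b_x / K * Ybar + u_x + \<beta> * Ybar"
    proof -
      have "b_x / K * Ybar = b_x - b_x * u_y / b_y" using pos unfolding Ybar_def by (simp add: field_simps)
      moreover have "\<beta> * Ybar = \<beta> * K * (1 - u_y / b_y)" unfolding Ybar_def by simp
      ultimately show ?thesis using a by linarith
    qed
    define P where "P = 1 + c * (b_x / K * 0 + b_x / K * Ybar + u_x + \<beta> * Ybar)"
    define Q where "Q = 1 + h * b_y"
    have Pp: "P > 0" using cpos pos Yp unfolding P_def by (simp add: add_pos_pos)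
    have Qp: "Q > 0" using hpos pos unfolding Q_def by (simp add: add_pos_pos)
    have B2: "1 + h * (b_y / K * 0 + b_y / K * Ybar + u_y) = Q" using yb unfolding Q_def by simp
    have N0: "1 + h * (b_y + \<beta> * 0) = Q" unfolding Q_def by simp
    let ?a11 = "(1 + c*b_x)/P" and ?a21 = "Ybar*h*\<beta>/Q - Ybar*h*(b_y/K)/Q"
    let ?a22 = "1 - h*(b_y - u_y)/Q"
    have D: "(hp_map b_x b_y u_x u_y K \<beta> h has_derivative
       (\<lambda>(dx, dy). (?a11 * dx + 0 * dy, ?a21 * dx + ?a22 * dy))) (at (0, Ybar))"
    proof -
      have yc: "Ybar * h * b_y / K = h*(b_y - u_y)"
      proof -
        have "Ybar * h * b_y / K = h * (b_y / K * Ybar)" by simp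
        also have "\<dots> = h*(b_y - u_y)" by (simp only: yb)
        finally show ?thesis .
      qed
      have Pn: "P \<noteq> 0" "Q \<noteq> 0" using Pp Qp by auto
      show ?thesis
        apply (rule hd)
        apply (simp_all only: B2 N0 P_def[symmetric])
        apply (simp_all only: Pn not_False_eq_True)
        using Pn Knz yc apply (simp_all add: field_simps power2_eq_square)
        by (metis distrib_left mult.left_commute)
    qed
    have "\<bar>?a11\<bar> < 1"
    proof -
      have "1 + c*b_x < P" using r cpos unfolding P_def by simp
      moreover have "1 + c*b_x > 0" using cpos pos by (simp add: add_pos_pos)
      ultimately show ?thesis using Pp by (simp add: abs_less_iff)
    qed
    moreover have "\<bar>?a22\<bar> < 1"
    proof -
      have "?a22 = (1 + h*u_y)/Q" using Qp unfolding Q_def by (simp add: field_simps)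
      moreover have "h*u_y < h*b_y" "h*u_y > 0" using hpos pos a by simp_all
      ultimately show ?thesis using Qp unfolding Q_def by (simp add: abs_less_iff)
    qed
    ultimately have J: "?a11*?a22 - 0*?a21 < 1" "1 - (?a11+?a22) + (?a11*?a22 - 0*?a21) > 0" "1 + (?a11+?a22) + (?a11*?a22 - 0*?a21) > 0"
      using tri_jury[of 0 ?a21 ?a11 ?a22] by simp_all
    show "stable_fixed_point (hp_map b_x b_y u_x u_y K \<beta> h) (0, Ybar)"
      by (rule stable_intro[OF _ D J]) (use yb Qp in \<open>simp add: fix_map Q_def\<close>)
  qed
  have C4: "b_x > u_x \<and> b_y > u_y \<and> b_x * u_y / b_y > u_x + \<beta> * K * (1 - u_y / b_y) \<and> R0 > 1
        \<longrightarrow> stable_fixed_point (hp_map b_x b_y u_x u_y K \<beta> h) (XH, YH)"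
  proof
    assume a: "b_x > u_x \<and> b_y > u_y \<and> b_x * u_y / b_y > u_x + \<beta> * K * (1 - u_y / b_y) \<and> R0 > 1"
    define X where "X = XH"
    define Y where "Y = YH"
    have "\<beta> * K > 0" using pos by simp
    hence dp0: "\<beta> * K + b_x - b_y > 0" using bxy by linarith
    hence dp: "\<beta> * (\<beta> * K + b_x - b_y) > 0" using pos by simp
    have nX: "b_x * u_y - b_y * u_x - \<beta> * K * (b_y - u_y) > 0"
    proof -
      have "b_x * u_y - b_y * u_x - \<beta> * K * (b_y - u_y) = b_y * (b_x * u_y / b_y - (u_x + \<beta> * K * (1 - u_y / b_y)))"
        using pos by (simp add: field_simps)
      thus ?thesis using a pos by simp
    qed
    have nY: "b_y * u_x - b_x * u_y + \<beta> * K * (b_x - u_x) > 0"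
    proof -
      have "b_y * u_x - b_x * u_y + \<beta> * K * (b_x - u_x) = (b_x * u_y) * (R0 - 1)"
        using pos unfolding R0_def by (simp add: field_simps)
      thus ?thesis using a pos by simp
    qed
    have Xp: "X > 0" unfolding X_def XH_def using nX dp by simp
    have Yp: "Y > 0" unfolding Y_def YH_def using nY dp by simp
    define d where "d = \<beta> * (\<beta> * K + b_x - b_y)"
    define nx where "nx = b_x * u_y - b_y * u_x - \<beta> * K * (b_y - u_y)"
    define ny where "ny = b_y * u_x - b_x * u_y + \<beta> * K * (b_x - u_x)"
    have Xd: "X = nx / d" unfolding X_def XH_def nx_def d_def ..
    have Yd: "Y = ny / d" unfolding Y_def YH_def ny_def d_def ..
    have dn: "d \<noteq> 0" using dp unfolding d_def by (metis less_irrefl)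
    have P1: "b_x * (K * d - nx - ny) = K * (u_x * d + \<beta> * ny)"
      unfolding d_def nx_def ny_def by (simp add: algebra_simps)
    have P2: "b_y * (K * d - nx - ny) + \<beta> * nx * K = u_y * K * d"
      unfolding d_def nx_def ny_def by (simp add: algebra_simps)
    have E1: "b_x * (K - X - Y) = K * (u_x + \<beta> * Y)"
    proof -
      have "b_x * (K - X - Y) = b_x * (K * d - nx - ny) / d" unfolding Xd Yd using dn by (simp add: field_simps)
      also have "\<dots> = K * (u_x * d + \<beta> * ny) / d" by (simp only: P1)
      also have "\<dots> = K * (u_x + \<beta> * Y)" unfolding Yd using dn by (simp add: field_simps)
      finally show ?thesis .
    qed
    have E2: "b_y * (K - X - Y) + \<beta> * X * K = u_y * K"
    proof -
      have "b_y * (K - X - Y) + \<beta> * X * K = (b_y * (K * d - nx - ny) + \<beta> * nx * K) / d" unfolding Xd Yd using dn by (simp add: field_simps)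
      also have "\<dots> = u_y * K * d / d" by (simp only: P2)
      also have "\<dots> = u_y * K" using dn by simp
      finally show ?thesis .
    qed
    have sp: "K - X - Y > 0"
    proof -
      have "u_x + \<beta> * Y > 0" using pos Yp by (simp add: add_pos_pos)
      hence "K * (u_x + \<beta> * Y) > 0" using pos by simp
      hence "b_x * (K - X - Y) > 0" using E1 by simp
      thus ?thesis using pos by (simp add: zero_less_mult_iff)
    qed
    have keyY: "b_y * (X + Y) > \<beta> * X * K"
    proof -
      have "u_y * K < b_y * K" using a pos by simp
      thus ?thesis using E2 by (simp add: algebra_simps)
    qed
    define A where "A = 1 + c * b_x"
    define N where "N = 1 + h * (b_y + \<beta> * X)"
    have Ap: "A > 0" using cpos pos unfolding A_def by (simp add: add_pos_pos)
    have Np: "N > 0" using hpos pos Xp unfolding N_def by (simp add: add_pos_pos)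
    have B1: "1 + c * (b_x / K * X + b_x / K * Y + u_x + \<beta> * Y) = A"
    proof -
      have "b_x / K * X + b_x / K * Y + u_x + \<beta> * Y = b_x" using E1 pos by (simp add: field_simps)
      thus ?thesis unfolding A_def by simp
    qed
    have B2: "1 + h * (b_y / K * X + b_y / K * Y + u_y) = N"
    proof -
      have "b_y / K * X + b_y / K * Y + u_y = b_y + \<beta> * X" using E2 pos by (simp add: field_simps)
      thus ?thesis unfolding N_def by simp
    qed
    define p where "p = X * c / A"
    define q where "q = Y * h / N"
    have pp: "p > 0" unfolding p_def using Xp cpos Ap by simp
    have qp: "q > 0" unfolding q_def using Yp hpos Np by simp
    let ?a11 = "1 - p * b_x / K" and ?a12 = "- p * (b_x / K + \<beta>)"
    let ?a21 = "q * (\<beta> - b_y / K)" and ?a22 = "1 - q * b_y / K"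
    have D: "(hp_map b_x b_y u_x u_y K \<beta> h has_derivative
       (\<lambda>(dx, dy). (?a11 * dx + ?a12 * dy, ?a21 * dx + ?a22 * dy))) (at (X, Y))"
    proof -
      have Pn: "A \<noteq> 0" "N \<noteq> 0" using Ap Np by auto
      show ?thesis
        apply (rule hd)
        apply (simp_all only: B1 B2 A_def[symmetric] N_def[symmetric])
        apply (simp_all only: Pn not_False_eq_True)
        using Pn Knz unfolding p_def q_def by (simp_all add: field_simps power2_eq_square)
    qed
    define m where "m = p * q * \<beta> * (\<beta> + (b_x - b_y) / K)"
    have m_eq: "m = (1 - ?a11) * (1 - ?a22) - ?a12 * ?a21"
      unfolding m_def using Knz by (simp add: field_simps)
    have m_pos: "m > 0" unfolding m_def using pp qp pos bxy by (simp add: add_pos_nonneg)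
    have a11p: "?a11 > 0"
    proof -
      have "p * b_x = X * (c * b_x / A)" unfolding p_def by simp
      moreover have "c * b_x / A < 1" using Ap unfolding A_def by simp
      ultimately have "p * b_x < X" using Xp mult_strict_left_mono[of "c * b_x / A" 1 X] by simp
      hence "p * b_x < K" using sp Yp by linarith
      thus ?thesis using pos by (simp add: field_simps)
    qed
    have a22p: "?a22 > 0"
    proof -
      have "q * b_y = Y * (h * b_y / N)" unfolding q_def by simp
      moreover have "h * b_y / N < 1"
      proof -
        have "h * (\<beta> * X) > 0" using hpos Xp pos by simp
        hence "h * b_y < N" unfolding N_def by (simp add: algebra_simps)
        thus ?thesis using Np by simp
      qed
      ultimately have "q * b_y < Y" using Yp mult_strict_left_mono[of "h * b_y / N" 1 Y] by simp
      hence "q * b_y < K" using sp Xp by linarith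
      thus ?thesis using pos by (simp add: field_simps)
    qed
    have m_lt: "m < (1 - ?a11) + (1 - ?a22)"
    proof -
      have q1: "1/q = 1/(Y*h) + (b_y + \<beta>*X)/Y" unfolding q_def N_def using Yp hpos by (simp add: field_simps)
      have "1/(Y*h) > 0" using Yp hpos by simp
      hence iq: "b_x/q > b_x * ((b_y + \<beta>*X)/Y)" using q1 pos by (simp add: divide_inverse)
      have p1: "1/p = 1/(X*c) + b_x/X" unfolding p_def A_def using Xp cpos by (simp add: field_simps)
      have "\<beta>*K*u_y/b_y < 1/c" using cbd cpos pos by (simp add: field_simps)
      hence r0: "\<beta>*K*u_y/b_y/X < 1/c/X" using Xp by (rule divide_strict_right_mono)
      have "\<beta>*K*u_y/(b_y*X) = \<beta>*K*u_y/b_y/X" by simp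
      also have "\<dots> < 1/c/X" by (rule r0)
      also have "\<dots> = 1/(X*c)" by simp
      finally have "1/(X*c) > \<beta>*K*u_y/(b_y*X)" .
      hence rr: "b_y * (1/(X*c)) > b_y * (\<beta>*K*u_y/(b_y*X))" using pos by (simp only: mult_strict_left_mono)
      have e1: "b_y * (\<beta>*K*u_y/(b_y*X)) = \<beta>*K*u_y/X" using pos by simp
      have e2: "b_y/p = b_y * (1/(X*c)) + b_x*b_y/X"
      proof -
        have "b_y/p = b_y*(1/p)" by simp
        also have "\<dots> = b_y*(1/(X*c) + b_x/X)" by (simp only: p1)
        also have "\<dots> = b_y * (1/(X*c)) + b_x*b_y/X" by (simp add: distrib_left)
        finally show ?thesis .
      qed
      have ip: "b_y/p > \<beta>*K*u_y/X + b_x*b_y/X" using rr unfolding e1 e2 by simp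
      define sl where "sl = K - X - Y"
      have sp': "sl > 0" using sp unfolding sl_def .
      have id: "b_x*X*(b_y+\<beta>*X) + \<beta>*(b_y * sl + \<beta>*X*K)*Y + b_x*b_y*Y - \<beta>*(K*\<beta>+b_x-b_y)*X*Y
          = b_x*(b_y*(X+Y) - \<beta>*X*K) + b_x*\<beta>*X*(K - Y) + b_x*\<beta>*X*X + \<beta>*b_y * sl * Y + \<beta>*b_y*X*Y"
        unfolding sl_def by (simp add: algebra_simps)
      have t1: "b_x*(b_y*(X+Y) - \<beta>*X*K) > 0" using keyY pos by simp
      have t2: "b_x*\<beta>*X*(K - Y) > 0" using pos Xp sp Yp by simp
      have t3: "b_x*\<beta>*X*X > 0" "\<beta>*b_y * sl * Y > 0" "\<beta>*b_y*X*Y > 0" using pos Xp Yp sp' by simp_all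
      have E2': "b_y * sl + \<beta>*X*K = u_y*K" using E2 unfolding sl_def by (simp add: algebra_simps)
      have poly: "\<beta>*(K*\<beta>+b_x-b_y)*X*Y < b_x*X*(b_y+\<beta>*X) + \<beta>*(u_y*K)*Y + b_x*b_y*Y"
        using id t1 t2 t3 unfolding E2' by linarith
      have "\<beta>*(K*\<beta>+b_x-b_y) < b_x*((b_y+\<beta>*X)/Y) + (\<beta>*K*u_y/X + b_x*b_y/X)"
      proof -
        have "\<beta>*(K*\<beta>+b_x-b_y) = \<beta>*(K*\<beta>+b_x-b_y)*X*Y/(X*Y)" using Xp Yp by simp
        also have "\<dots> < (b_x*X*(b_y+\<beta>*X) + \<beta>*(u_y*K)*Y + b_x*b_y*Y)/(X*Y)"
          by (rule divide_strict_right_mono[OF poly]) (use Xp Yp in simp)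
        also have "\<dots> = b_x*((b_y+\<beta>*X)/Y) + (\<beta>*K*u_y/X + b_x*b_y/X)"
          using Xp Yp by (simp add: field_simps)
        finally show ?thesis .
      qed
      hence key: "\<beta>*(K*\<beta>+b_x-b_y) < b_x/q + b_y/p" using iq ip by linarith
      have "m = p*q*(\<beta>*(K*\<beta>+b_x-b_y))/K" unfolding m_def using Knz by (simp add: field_simps)
      also have "\<dots> < p*q*(b_x/q + b_y/p)/K"
        using key pp qp pos by (simp add: divide_strict_right_mono)
      also have "\<dots> = (1 - ?a11) + (1 - ?a22)" using pp qp Knz by (simp add: field_simps)
      finally show ?thesis .
    qed
    have J: "?a11*?a22 - ?a12*?a21 < 1" "1 - (?a11+?a22) + (?a11*?a22 - ?a12*?a21) > 0"
        "1 + (?a11+?a22) + (?a11*?a22 - ?a12*?a21) > 0"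
      using m_jury[OF m_eq m_pos m_lt a11p a22p] by simp_all
    have "stable_fixed_point (hp_map b_x b_y u_x u_y K \<beta> h) (X, Y)"
      by (rule stable_intro[OF _ D J]) (use Ap Np in \<open>simp only: fix_map case_prod_conv B1 B2 A_def[symmetric] N_def[symmetric], simp\<close>)
    thus "stable_fixed_point (hp_map b_x b_y u_x u_y K \<beta> h) (XH, YH)" unfolding X_def Y_def .
  qed
  show ?thesis using C1 C2 C3 C4 by blast
qed

end
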